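(* Let $S=\langle n_1<n_2<\cdots<n_e\rangle$ be a numerical semigroup with $\mathrm{msg}(S)=\{n_1<\cdots<n_e\}$, $n_1\geq 3$ and $e\geq 2$. If $S$ is a MANS-semigroup such that $n_e\bmod n_1<n_1-1$, then $n_e+1$ is suitably monotone for $S$.
   Context: $\mathbb{N}=\{0,1,2,\ldots\}$. A numerical semigroup is a subset $S\subseteq\mathbb{N}$ closed under addition, containing $0$, with finite complement; $\langle A\rangle$ is the submonoid generated by $A$; $\mathrm{msg}(S)$ is its unique finite minimal system of generators. For $n\in S\setminus\{0\}$, $\mathrm{Ap}(S,n)=\{s\in S:s-n\notin S\}=\{w(0),\ldots,w(n-1)\}$ with $w(i)$ the least element of $S$ congruent to $i$ mod $n$. $S$ is a MANS-semigroup if $w(1)<\cdots<w(\mathrm{m}(S)-1)$ for $\mathrm{Ap}(S,\mathrm{m}(S))$, $\mathrm{m}(S)$ the least element of $S\setminus\{0\}$. For a MANS-semigroup $S$ with $\mathrm{msg}(S)=\{n_1<\cdots<n_e\}$, $e\geq2$, and $\mathrm{Ap}(S,n_1)=\{w(0),\ldots,w(n_1-1)\}$, $n\in\mathbb{N}$ is suitably monotone for $S$ if (i) $n_e<n$, (ii) $n_e\bmod n_1<n\bmod n_1$, and (iii) $w(n\bmod n_1-1)<n<w(n\bmod n_1)$. $a\bmod b$ is the remainder of the division of $a$ by $b$. *)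

theory Defs
  imports Main
begin

definition numerical_semigroup :: "nat set \<Rightarrow> bool" where
  "numerical_semigroup S \<longleftrightarrow> 0 \<in> S \<and> (\<forall>a\<in>S. \<forall>b\<in>S. a + b \<in> S) \<and> finite (UNIV - S)"

inductive_set monoid_gen :: "nat set \<Rightarrow> nat set" for A :: "nat set" where
  zero: "0 \<in> monoid_gen A"
| add: "a \<in> A \<Longrightarrow> x \<in> monoid_gen A \<Longrightarrow> a + x \<in> monoid_gen A"

definition is_msg :: "nat set \<Rightarrow> nat set \<Rightarrow> bool" where
  "is_msg S A \<longleftrightarrow> monoid_gen A = S \<and> (\<forall>B. B \<subset> A \<longrightarrow> monoid_gen B \<noteq> S)"

definition multiplicity :: "nat set \<Rightarrow> nat" where
  "multiplicity S = (LEAST x. x \<in> S \<and> 0 < x)"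

definition apery_w :: "nat set \<Rightarrow> nat \<Rightarrow> nat \<Rightarrow> nat" where
  "apery_w S n i = (LEAST s. s \<in> S \<and> s mod n = i mod n)"

definition MANS :: "nat set \<Rightarrow> bool" where
  "MANS S \<longleftrightarrow> (\<forall>i j. 1 \<le> i \<and> i < j \<and> j \<le> multiplicity S - 1 \<longrightarrow>
      apery_w S (multiplicity S) i < apery_w S (multiplicity S) j)"

definition suitably_monotone :: "nat set \<Rightarrow> nat set \<Rightarrow> nat \<Rightarrow> bool" where
  "suitably_monotone S A n \<longleftrightarrow>
     Max A < n \<and> Max A mod Min A < n mod Min A \<and>
     apery_w S (Min A) (n mod Min A - 1) < n \<and> n < apery_w S (Min A) (n mod Min A)"

end

theory Submission
  imports Defs
begin

lemma mg_add: "x \<in> monoid_gen B \<Longrightarrow> y \<in> monoid_gen B \<Longrightarrow> x + y \<in> monoid_gen B"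
  by (induction x rule: monoid_gen.induct) (auto simp: add.assoc intro: monoid_gen.intros)

lemma mg_mono: assumes "B \<subseteq> A" shows "x \<in> monoid_gen B \<Longrightarrow> x \<in> monoid_gen A"
  by (induction x rule: monoid_gen.induct) (use assms in \<open>auto intro: monoid_gen.intros\<close>)

lemma irred:
  assumes msg: "is_msg S A" and pos: "\<forall>a\<in>A. a > 0" and aA: "a \<in> A"
    and xS: "x \<in> S" and yS: "y \<in> S" and x0: "x > 0" and y0: "y > 0" and axy: "a = x + y"
  shows False
proof -
  define B where "B = A - {a}"
  have SA: "monoid_gen A = S" using msg unfolding is_msg_def by blast
  have main: "\<forall>n. n \<in> monoid_gen A \<longrightarrow> n \<in> monoid_gen B"
  proof (rule allI)
    fix n show "n \<in> monoid_gen A \<longrightarrow> n \<in> monoid_gen B"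
    proof (induction n rule: less_induct)
      case (less n)
      show ?case
      proof
        assume "n \<in> monoid_gen A"
        then show "n \<in> monoid_gen B"
        proof (cases rule: monoid_gen.cases)
          case zero then show ?thesis by (simp add: monoid_gen.zero)
        next
          case (add b z)
          have "b > 0" using pos add by auto
          then have zB: "z \<in> monoid_gen B" using less add by auto
          show ?thesis
          proof (cases "b = a")
            case False
            then have "b \<in> B" using add B_def by auto
            then show ?thesis using add zB monoid_gen.add by auto
          next
            case True
            have "x < n" "y < n" using True add axy y0 x0 by auto
            then have "x \<in> monoid_gen B" "y \<in> monoid_gen B" using less xS yS SA by auto
            then have "x + (y + z) \<in> monoid_gen B" using zB mg_add by blast
            then show ?thesis using True add axy by (simp add: add.assoc)
          qed
        qed
      qed
    qed
  qed
  have "monoid_gen B = S"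
    using main SA mg_mono[of B A] B_def by blast
  moreover have "B \<subset> A" using aA B_def by auto
  ultimately show False using msg unfolding is_msg_def by blast
qed

theorem proposition4p13:
  fixes S A :: "nat set"
  assumes "numerical_semigroup S"
    and "is_msg S A"
    and "finite A"
    and "card A \<ge> 2"
    and "Min A \<ge> 3"
    and "MANS S"
    and "Max A mod Min A < Min A - 1"
  shows "suitably_monotone S A (Max A + 1)"
proof -
  define m where "m = Min A"
  define M where "M = Max A"
  define r where "r = M mod m"
  define w where "w = apery_w S m"
  have SA: "monoid_gen A = S" using assms(2) unfolding is_msg_def by blast
  have Ane: "A \<noteq> {}" using assms(4) by auto
  have Age: "\<forall>a\<in>A. a \<ge> 3" using assms(5) assms(3) Ane by auto
  have pos: "\<forall>a\<in>A. a > 0" using Age by auto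
  have mA: "m \<in> A" using m_def assms(3) Ane by auto
  have MA: "M \<in> A" using M_def assms(3) Ane by auto
  have m3: "m \<ge> 3" using assms(5) m_def by auto
  have mM: "m < M"
  proof -
    have le: "m \<le> M" using m_def M_def assms(3) Ane mA by simp
    show ?thesis
    proof (rule ccontr)
      assume "\<not> m < M"
      then have "m = M" using le by simp
      then have "A \<subseteq> {m}" using m_def M_def assms(3) by (metis Max_ge Min_le antisym singletonI subsetI)
      then have "card A \<le> card {m}" by (intro card_mono) auto
      then show False using assms(4) by simp
    qed
  qed
  have AS: "A \<subseteq> S" using SA monoid_gen.add[OF _ monoid_gen.zero, of _ A] by auto
  have S0: "0 \<in> S" using assms(1) unfolding numerical_semigroup_def by auto
  have Sadd: "\<And>x y. x \<in> S \<Longrightarrow> y \<in> S \<Longrightarrow> x + y \<in> S"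
    using assms(1) unfolding numerical_semigroup_def by auto
  have mS: "m \<in> S" using mA AS by auto
  have mult: "k * m \<in> S" for k
    by (induction k) (auto simp: S0 Sadd mS)
  have Sge: "x \<in> S \<Longrightarrow> x > 0 \<Longrightarrow> m \<le> x" for x
  proof -
    assume "x \<in> S" "x > 0"
    then have "x \<in> monoid_gen A" using SA by simp
    then show "m \<le> x" using \<open>x > 0\<close>
      by (induction x rule: monoid_gen.induct) (use m_def assms(3) in \<open>auto intro: trans_le_add1\<close>)
  qed
  have multS: "multiplicity S = m"
    unfolding multiplicity_def
    by (rule Least_equality) (use mS m3 Sge in auto)
  have fin: "finite (UNIV - S)" using assms(1) unfolding numerical_semigroup_def by auto
  then obtain N where N: "\<forall>x\<in>UNIV - S. x < N" using finite_nat_set_iff_bounded by blast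
  have w_in: "w i \<in> S \<and> w i mod m = i mod m" for i
  proof -
    have "i mod m + N * m \<in> S"
    proof (rule ccontr)
      assume "i mod m + N * m \<notin> S"
      then have "i mod m + N * m < N" using N by auto
      moreover have "N \<le> N * m" using m3 by simp
      ultimately show False by linarith
    qed
    moreover have "(i mod m + N * m) mod m = i mod m" by simp
    ultimately show ?thesis unfolding w_def apery_w_def by (metis (mono_tags, lifting) LeastI)
  qed
  have w_le: "x \<in> S \<Longrightarrow> x mod m = i mod m \<Longrightarrow> w i \<le> x" for x i
    unfolding w_def apery_w_def by (rule Least_le) auto
  have w0: "w 0 = 0" using w_le[OF S0, of 0] by simp
  have irr: "\<And>x y. x \<in> S \<Longrightarrow> y \<in> S \<Longrightarrow> x > 0 \<Longrightarrow> y > 0 \<Longrightarrow> M = x + y \<Longrightarrow> False"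
    using irred[OF assms(2) pos MA] by blast
  have MS: "M \<in> S" using MA AS by auto
  have rm: "r < m" using r_def m3 by simp
  have wr: "w r = M"
  proof (rule ccontr)
    assume ne: "w r \<noteq> M"
    have "w r \<le> M" using w_le[OF MS, of r] r_def by simp
    with ne have lt: "w r < M" by simp
    have wrm: "w r mod m = M mod m" using w_in[of r] r_def by simp
    then have "m dvd (M - w r)" using lt mod_eq_dvd_iff_nat[of "w r" M m] by simp
    then obtain k where k: "M - w r = m * k" by blast
    have "k \<noteq> 0" using k lt by (metis mult_0_right zero_less_diff less_irrefl)
    then have "M - m = w r + (k - 1) * m" using k lt
      by (cases k) (auto simp: algebra_simps)
    then have "M - m \<in> S" using Sadd w_in mult by metis
    then show False using irr[of m "M - m"] mS mM m3 by auto
  qed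
  have r1: "r \<ge> 1"
  proof (rule ccontr)
    assume "\<not> r \<ge> 1" then have "r = 0" by simp
    then show False using wr w0 mM by simp
  qed
  have r1m: "r + 1 \<le> m - 1" using assms(7) r_def m_def M_def by simp
  have mans: "1 \<le> i \<Longrightarrow> i < j \<Longrightarrow> j \<le> m - 1 \<Longrightarrow> w i < w j" for i j
    using assms(6) multS unfolding MANS_def w_def by auto
  have wr1: "M < w (r + 1)" using mans[OF r1, of "r+1"] r1m wr by simp
  have Mmod: "(M + 1) mod m = r + 1"
    using r1m r_def by (simp add: mod_Suc)
  have split: "x \<in> S \<Longrightarrow> y \<in> S \<Longrightarrow> x + y = w k \<Longrightarrow> x = w (x mod m)" for x y k
  proof -
    assume xS: "x \<in> S" and yS: "y \<in> S" and e: "x + y = w k"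
    have a: "w (x mod m) \<le> x" using w_le[OF xS] by simp
    have "w (x mod m) + y \<in> S" using Sadd w_in yS by blast
    moreover have "(w (x mod m) + y) mod m = k mod m"
    proof -
      have "(w (x mod m) + y) mod m = (x + y) mod m"
        using w_in[of "x mod m"] by (metis mod_add_left_eq mod_mod_trivial)
      also have "\<dots> = k mod m" using e w_in[of k] by simp
      finally show ?thesis .
    qed
    ultimately have "w k \<le> w (x mod m) + y" using w_le by blast
    then show "x = w (x mod m)" using a e by simp
  qed
  have notS: "M + 1 \<notin> S"
  proof
    assume M1S: "M + 1 \<in> S"
    have "w (r + 1) \<le> M + 1" using w_le[OF M1S, of "r+1"] Mmod r1m by simp
    then have wM1: "w (r+1) = M + 1" using wr1 by simp
    have "M + 1 \<in> monoid_gen A" using M1S SA by simp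
    then obtain a s where aA: "a \<in> A" and sS: "s \<in> S" and as: "M + 1 = a + s"
      using SA by (cases rule: monoid_gen.cases) auto
    have aS: "a \<in> S" using aA AS by auto
    have aM: "a \<le> M" using aA M_def assms(3) by simp
    then have s0: "s > 0" using as by simp
    have a0: "a > 0" using pos aA by simp
    have aw: "a = w (a mod m)" using split[OF aS sS] as wM1 by metis
    have sw: "s = w (s mod m)" using split[OF sS aS] as wM1 by (metis add.commute)
    have gen: "\<And>i. i < m \<Longrightarrow> w i < M + 1 \<Longrightarrow> 0 < w i \<Longrightarrow> 1 \<le> i \<and> i < r + 1"
    proof -
      fix i assume im: "i < m" and wi: "w i < M + 1" and wi0: "0 < w i"
      have "i \<noteq> 0" using wi0 w0 by (metis less_irrefl)
      moreover have "i \<noteq> r + 1" using wi wM1 by auto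
      moreover have "\<not> i > r + 1"
      proof
        assume "i > r + 1"
        then have "w (r+1) < w i" using mans[of "r+1" i] im by simp
        then show False using wi wM1 by simp
      qed
      ultimately show "1 \<le> i \<and> i < r + 1" by simp
    qed
    define i where "i = a mod m"
    define j where "j = s mod m"
    have im: "i < m" "j < m" using i_def j_def m3 by auto
    have ir: "1 \<le> i" "i < r + 1" using gen[of i] im aw s0 a0 as i_def by auto
    have jr: "1 \<le> j" "j < r + 1" using gen[of j] im sw s0 a0 as j_def by auto
    have "(i + j) mod m = r + 1"
    proof -
      have "(i + j) mod m = (a + s) mod m" using i_def j_def by (simp add: mod_add_eq)
      also have "\<dots> = r + 1" using as Mmod by simp
      finally show ?thesis .
    qed
    then have ij: "i + j = r + 1"
    proof -
      assume h: "(i + j) mod m = r + 1"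
      show "i + j = r + 1"
      proof (cases "i + j < m")
        case True then show ?thesis using h by simp
      next
        case False
        then have "(i + j) mod m = i + j - m" using im
          by (simp add: le_mod_geq)
        then show ?thesis using h ir jr rm by simp
      qed
    qed
    have key: "\<And>p q. p \<in> S \<Longrightarrow> q \<in> S \<Longrightarrow> 2 \<le> p mod m \<Longrightarrow> p = w (p mod m) \<Longrightarrow> q > 0
       \<Longrightarrow> p mod m + q mod m = r + 1 \<Longrightarrow> p + q = M + 1 \<Longrightarrow> False"
    proof -
      fix p q assume pS: "p \<in> S" and qS: "q \<in> S" and p2: "2 \<le> p mod m" and pw: "p = w (p mod m)"
        and q0: "q > 0" and pq: "p mod m + q mod m = r + 1" and pqM: "p + q = M + 1"
      let ?k = "p mod m - 1"
      have pm: "p mod m < m" using m3 by simp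
      have "w ?k < w (p mod m)" using mans[of ?k "p mod m"] p2 pm by simp
      then have lt: "w ?k + q < M + 1" using pw pqM by simp
      have "w ?k + q \<in> S" using Sadd w_in qS by blast
      moreover have "(w ?k + q) mod m = r mod m"
      proof -
        have "(w ?k + q) mod m = (?k + q mod m) mod m"
          using w_in[of ?k] by (metis mod_add_eq mod_mod_trivial)
        also have "?k + q mod m = r" using pq p2 by simp
        finally show ?thesis .
      qed
      ultimately have "w r \<le> w ?k + q" using w_le by blast
      then have "M = w ?k + q" using lt wr by simp
      moreover have "w ?k > 0"
      proof (rule ccontr)
        assume "\<not> w ?k > 0"
        then have "w ?k = 0" by simp
        then have "?k mod m = 0" using w_in[of ?k] by simp
        moreover have "?k < m" using pm by simp
        ultimately show False using p2 by simp
      qed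
      ultimately show False using irr[of "w ?k" q] w_in qS q0 by blast
    qed
    show False
    proof (cases "2 \<le> i")
      case True
      then show False using key[OF aS sS] i_def j_def aw s0 ij as by simp
    next
      case False
      show False
      proof (cases "2 \<le> j")
        case True
        then show False using key[OF sS aS] i_def j_def sw a0 ij as by simp
      next
        case False
        then have "i = 1" "j = 1" "r = 1" using \<open>\<not> 2 \<le> i\<close> ir jr ij by auto
        then have "a = M" "s = M" using aw sw wr i_def j_def by auto
        then show False using as mM m3 by simp
      qed
    qed
  qed
  have wr1': "M + 1 < w (r + 1)"
  proof -
    have "w (r+1) \<noteq> M + 1" using notS w_in by metis
    then show ?thesis using wr1 by simp
  qed
  show ?thesis
    unfolding suitably_monotone_def
    using Mmod wr wr1' r_def
    by (simp add: m_def[symmetric] M_def[symmetric] w_def[symmetric])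
qed

end
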